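(* Let $F$ be a distribution on $\mathbb{R}$ with $F\in\mathcal{S}$. Let $Y_1$ and $Y_2$ be random variables which are conditionally independent given some $\sigma$-algebra $\mathcal{F}$, and suppose that for some constants $c_1\ge0$, $c_2\ge0$ and $r>0$: (i) for $i=1,2$, $P(Y_i>y)\lesssim c_i\overline{F}(y)$ as $y\to\infty$ (where, when $c_i=0$, this means $P(Y_i>y)=o(\overline{F}(y))$ as $y\to\infty$); (ii) $P(Y_1>y\mid\mathcal{F})\le r\,\overline{F}(y)$ for all $y$, almost surely. Then $P(Y_1+Y_2>y)\lesssim(c_1+c_2)\,\overline{F}(y)$ as $y\to\infty$ (with the same interpretation if $c_1+c_2=0$).
   Context: $\overline{F}(y):=1-F(y)$. For functions $f,g$, $f(y)\lesssim g(y)$ as $y\to\infty$ means $\limsup_{y\to\infty}f(y)/g(y)\le1$. A distribution $G$ on $\mathbb{R}$ is subexponential ($G\in\mathcal{S}$) iff $G_+(y):=G(y)\mathbf{1}(y\ge0)$ satisfies $\overline{G_+^{*2}}(y)/\overline{G_+}(y)\to2$ as $y\to\infty$, where $G_+^{*2}$ is the convolution of $G_+$ with itself. *)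

theory Defs
  imports "HOL-Probability.Probability" "HOL-Library.Landau_Symbols"
begin

definition tailF :: "real measure \<Rightarrow> real \<Rightarrow> real" where
  "tailF G y = 1 - measure G {..y}"

text \<open>G_+ : the distribution with distribution function G(y) 1(y >= 0), i.e. the law of max(X,0).\<close>
definition pos_part_distr :: "real measure \<Rightarrow> real measure" where
  "pos_part_distr G = distr G borel (\<lambda>x. max x 0)"

definition subexponential :: "real measure \<Rightarrow> bool" where
  "subexponential G \<longleftrightarrow> prob_space G \<and> sets G = sets borel \<and>
     ((\<lambda>y. tailF (pos_part_distr G \<star> pos_part_distr G) y / tailF (pos_part_distr G) y)
        \<longlongrightarrow> 2) at_top"

definition asymp_le :: "(real \<Rightarrow> real) \<Rightarrow> (real \<Rightarrow> real) \<Rightarrow> bool" where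
  "asymp_le f g \<longleftrightarrow> Limsup at_top (\<lambda>y. ereal (f y / g y)) \<le> 1"

definition asymp_le_mult :: "(real \<Rightarrow> real) \<Rightarrow> real \<Rightarrow> (real \<Rightarrow> real) \<Rightarrow> bool" where
  "asymp_le_mult f c g \<longleftrightarrow>
     (if c = 0 then f \<in> o[at_top](g) else asymp_le f (\<lambda>y. c * g y))"

definition cprob_given :: "'a measure \<Rightarrow> 'a measure \<Rightarrow> 'a set \<Rightarrow> 'a \<Rightarrow> real" where
  "cprob_given M Fs A = real_cond_exp M Fs (indicator (A \<inter> space M))"

definition cond_indep_rv :: "'a measure \<Rightarrow> 'a measure \<Rightarrow> ('a \<Rightarrow> real) \<Rightarrow> ('a \<Rightarrow> real) \<Rightarrow> bool" where
  "cond_indep_rv M Fs X Y \<longleftrightarrow>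
     (\<forall>A \<in> sets borel. \<forall>B \<in> sets borel.
        AE \<omega> in M. cprob_given M Fs (X -` A \<inter> Y -` B) \<omega> =
                    cprob_given M Fs (X -` A) \<omega> * cprob_given M Fs (Y -` B) \<omega>)"

end

theory Submission
  imports Defs
begin


lemma ppd_basic:
  assumes "prob_space F" "sets F = sets borel"
  shows "prob_space (pos_part_distr F)" "sets (pos_part_distr F) = sets borel"
    "space (pos_part_distr F) = UNIV" "real_distribution (pos_part_distr F)"
proof -
  have m: "(\<lambda>x::real. max x 0) \<in> measurable F borel" using assms(2)
    by (simp cong: measurable_cong_sets)
  show ps: "prob_space (pos_part_distr F)" unfolding pos_part_distr_def
    by (rule prob_space.prob_space_distr[OF assms(1) m])
  show "sets (pos_part_distr F) = sets borel" "space (pos_part_distr F) = UNIV"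
    by (auto simp: pos_part_distr_def)
  then show "real_distribution (pos_part_distr F)" using ps unfolding real_distribution_def real_distribution_axioms_def by auto
qed

lemma ppd_measure:
  assumes "prob_space F" "sets F = sets borel" "A \<in> sets borel"
  shows "measure (pos_part_distr F) A = measure F ((\<lambda>x. max x 0) -` A)"
proof -
  have sp: "space F = UNIV" using assms(2) sets_eq_imp_space_eq by fastforce
  have m: "(\<lambda>x::real. max x 0) \<in> measurable F borel" using assms(2)
    by (simp cong: measurable_cong_sets)
  show ?thesis unfolding pos_part_distr_def using assms(3) m by (simp add: measure_distr sp)
qed

lemma ppd_tail:
  assumes "prob_space F" "sets F = sets borel" "y \<ge> 0"
  shows "tailF (pos_part_distr F) y = tailF F y"
proof -
  have "(\<lambda>x::real. max x 0) -` {..y} = {..y}" using assms(3) by auto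
  then show ?thesis unfolding tailF_def using ppd_measure[OF assms(1,2), of "{..y}"] by simp
qed

lemma ppd_neg:
  assumes "prob_space F" "sets F = sets borel"
  shows "measure (pos_part_distr F) {..<0} = 0"
proof -
  have "(\<lambda>x::real. max x 0) -` {..<0} = {}" by auto
  then show ?thesis using ppd_measure[OF assms(1,2), of "{..<0}"] by simp
qed

locale gdist =
  fixes G :: "real measure"
  assumes rd: "real_distribution G" and neg0: "measure G {..<0} = 0"
begin

interpretation real_distribution G by (rule rd)

lemma spG[simp]: "space G = UNIV" and setsG[simp]: "sets G = sets borel"
  by auto

lemma Gopen: "measure G {a<..} = tailF G a"
proof -
  have "{a<..} = space G - {..a}" by auto
  moreover have "prob (space G - {..a}) = 1 - prob {..a}" by (rule prob_compl) simp
  ultimately show ?thesis unfolding tailF_def by simp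
qed

lemma Gint: "a \<le> b \<Longrightarrow> measure G {a<..b} = tailF G a - tailF G b"
proof -
  assume ab: "a \<le> b"
  have "{a<..b} = {..b} - {..a}" by auto
  moreover have "{..a} \<subseteq> {..b}" using ab by auto
  ultimately show ?thesis unfolding tailF_def by (simp add: finite_measure_Diff)
qed

lemma G0: "0 \<le> b \<Longrightarrow> measure G {0..b} = 1 - tailF G b"
proof -
  assume b: "0 \<le> b"
  have e: "{..b} = {..<0} \<union> {0..b}" using b by auto
  have "measure G ({..<0} \<union> {0..b}) = measure G {..<0} + measure G {0..b}"
    by (rule finite_measure_Union) auto
  then have "measure G {..b} = measure G {..<0} + measure G {0..b}" using e by simp
  then show ?thesis unfolding tailF_def using neg0 by simp
qed

lemma Gnn: "measure G {0..} = 1"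
proof -
  have "{0..} = space G - {..<0}" by auto
  moreover have "prob (space G - {..<0}) = 1 - prob {..<0}" by (rule prob_compl) simp
  ultimately show ?thesis using neg0 by simp
qed

lemma Gb_mono: "a \<le> b \<Longrightarrow> tailF G b \<le> tailF G a"
  unfolding tailF_def by (intro diff_left_mono finite_measure_mono) auto

lemma Gb_nn: "0 \<le> tailF G a" "tailF G a \<le> 1"
  unfolding tailF_def by auto

lemma Gb_lim: "(tailF G \<longlongrightarrow> 0) at_top"
proof -
  have "(cdf G \<longlongrightarrow> 1) at_top" by (rule cdf_lim_at_top_prob)
  then have "((\<lambda>y. 1 - cdf G y) \<longlongrightarrow> 1 - 1) at_top" by (intro tendsto_intros)
  moreover have "tailF G = (\<lambda>y. 1 - cdf G y)" by (rule ext) (simp add: tailF_def cdf_def)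
  ultimately show ?thesis by simp
qed

lemma pps: "prob_space (G \<Otimes>\<^sub>M G)"
  by (simp add: prob_space_axioms prob_space_pair)

lemma rect: "A \<in> sets borel \<Longrightarrow> B \<in> sets borel \<Longrightarrow>
  measure (G \<Otimes>\<^sub>M G) (A \<times> B) = measure G A * measure G B"
  unfolding measure_def
  by (simp add: emeasure_pair_measure_Times enn2real_mult)

lemma tail2: "tailF (G \<star> G) z = measure (G \<Otimes>\<^sub>M G) {p. z < fst p + snd p}"
proof -
  interpret P: prob_space "G \<Otimes>\<^sub>M G" by (rule pps)
  have m: "(\<lambda>(x, y). x + y) \<in> measurable (G \<Otimes>\<^sub>M G) (borel::real measure)"
    by measurable
  have "measure (G \<star> G) {..z} = measure (G \<Otimes>\<^sub>M G) ((\<lambda>(x, y). x + y) -` {..z} \<inter> space (G \<Otimes>\<^sub>M G))"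
    unfolding convolution_def using m by (simp add: measure_distr)
  also have "(\<lambda>(x, y). x + y) -` {..z} \<inter> space (G \<Otimes>\<^sub>M G) = space (G \<Otimes>\<^sub>M G) - {p. z < fst p + snd p}"
    by (auto simp: space_pair_measure)
  also have "measure (G \<Otimes>\<^sub>M G) \<dots> = 1 - measure (G \<Otimes>\<^sub>M G) {p. z < fst p + snd p}"
  proof (intro P.prob_compl)
    have "{p \<in> space (G \<Otimes>\<^sub>M G). z < fst p + snd p} \<in> sets (G \<Otimes>\<^sub>M G)" by measurable
    then show "{p. z < fst p + snd p} \<in> sets (G \<Otimes>\<^sub>M G)" by (simp add: space_pair_measure)
  qed
  finally show ?thesis unfolding tailF_def by simp
qed

lemma Pset: "{p. P (fst p) (snd p)} \<in> sets (G \<Otimes>\<^sub>M G)"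
  if "{p \<in> space (G \<Otimes>\<^sub>M G). P (fst p) (snd p)} \<in> sets (G \<Otimes>\<^sub>M G)"
  using that by (simp add: space_pair_measure)

lemma Mn_sets: "{p. z < fst p + snd p \<and> a < fst p \<and> b < snd p} \<in> sets (G \<Otimes>\<^sub>M G)"
  by (rule Pset) measurable

lemma lt_ineq:
  assumes s: "0 \<le> s" "s < y"
  shows "tailF G y + (1 - tailF G s) * tailF G y + (tailF G s - tailF G y) * tailF G (y - s)
     \<le> tailF (G \<star> G) y"
proof -
  interpret P: prob_space "G \<Otimes>\<^sub>M G" by (rule pps)
  define A1 where "A1 = {y<..} \<times> {0::real..}"
  define A2 where "A2 = {0..s} \<times> {y<..}"
  define A3 where "A3 = {s<..y} \<times> {y-s<..}"
  have sA: "A1 \<in> P.events" "A2 \<in> P.events" "A3 \<in> P.events"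
    unfolding A1_def A2_def A3_def by (auto intro!: pair_measureI)
  have m1: "P.prob A1 = tailF G y" unfolding A1_def by (simp add: rect Gopen Gnn)
  have m2: "P.prob A2 = (1 - tailF G s) * tailF G y" unfolding A2_def using s by (simp add: rect Gopen G0)
  have m3: "P.prob A3 = (tailF G s - tailF G y) * tailF G (y - s)" unfolding A3_def using s by (simp add: rect Gopen Gint)
  have "P.prob (A1 \<union> A2) = P.prob A1 + P.prob A2"
    by (rule P.finite_measure_Union) (use sA s in \<open>auto simp: A1_def A2_def\<close>)
  moreover have "P.prob ((A1 \<union> A2) \<union> A3) = P.prob (A1 \<union> A2) + P.prob A3"
    by (rule P.finite_measure_Union) (use sA s in \<open>auto simp: A1_def A2_def A3_def\<close>)
  moreover have "P.prob ((A1 \<union> A2) \<union> A3) \<le> P.prob {p. y < fst p + snd p}"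
  proof (rule P.finite_measure_mono)
    show "A1 \<union> A2 \<union> A3 \<subseteq> {p. y < fst p + snd p}" using s by (auto simp: A1_def A2_def A3_def)
    show "{p. y < fst p + snd p} \<in> P.events" by (rule Pset) measurable
  qed
  ultimately show ?thesis using m1 m2 m3 by (simp add: tail2)
qed

lemma mn_ineq:
  assumes h: "1 \<le> h" "2 * h < z"
  shows "measure (G \<Otimes>\<^sub>M G) {p. z < fst p + snd p \<and> h - 1 < fst p \<and> h < snd p}
     + (1 - tailF G (h - 1)) * tailF G z + (1 - tailF G h) * tailF G z \<le> tailF (G \<star> G) z"
proof -
  interpret P: prob_space "G \<Otimes>\<^sub>M G" by (rule pps)
  define A1 where "A1 = {p. z < fst p + snd p \<and> h - 1 < fst p \<and> h < snd p}"
  define A2 where "A2 = {0..h-1} \<times> {z<..}"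
  define A3 where "A3 = {z<..} \<times> {0..h}"
  have sA: "A1 \<in> P.events" "A2 \<in> P.events" "A3 \<in> P.events"
  proof -
    show "A1 \<in> P.events" unfolding A1_def by (rule Pset) measurable
    show "A2 \<in> P.events" "A3 \<in> P.events" unfolding A2_def A3_def by (auto intro!: pair_measureI)
  qed
  have m2: "P.prob A2 = (1 - tailF G (h-1)) * tailF G z" unfolding A2_def using h by (simp add: rect Gopen G0)
  have m3: "P.prob A3 = (1 - tailF G h) * tailF G z" unfolding A3_def using h by (simp add: rect Gopen G0)
  have "P.prob (A1 \<union> A2) = P.prob A1 + P.prob A2"
    by (rule P.finite_measure_Union) (use sA h in \<open>auto simp: A1_def A2_def\<close>)
  moreover have "P.prob ((A1 \<union> A2) \<union> A3) = P.prob (A1 \<union> A2) + P.prob A3"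
    by (rule P.finite_measure_Union) (use sA h in \<open>auto simp: A1_def A2_def A3_def\<close>)
  moreover have "P.prob ((A1 \<union> A2) \<union> A3) \<le> P.prob {p. z < fst p + snd p}"
  proof (rule P.finite_measure_mono)
    show "A1 \<union> A2 \<union> A3 \<subseteq> {p. z < fst p + snd p}" using h by (auto simp: A1_def A2_def A3_def)
    show "{p. z < fst p + snd p} \<in> P.events" by (rule Pset) measurable
  qed
  ultimately show ?thesis using m2 m3 by (simp add: tail2 A1_def)
qed

lemma Gb_pos:
  assumes R: "((\<lambda>y. tailF (G \<star> G) y / tailF G y) \<longlongrightarrow> 2) at_top"
  shows "0 < tailF G y"
proof -
  have "eventually (\<lambda>y. 1 < tailF (G \<star> G) y / tailF G y) at_top"
    using R by (rule order_tendstoD) simp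
  then obtain Y where Y: "\<And>x. x \<ge> Y \<Longrightarrow> 1 < tailF (G \<star> G) x / tailF G x"
    by (auto simp: eventually_at_top_linorder)
  have "tailF G (max y Y) \<noteq> 0" using Y[of "max y Y"] by auto
  then have "0 < tailF G (max y Y)" using Gb_nn(1)[of "max y Y"] by linarith
  also have "\<dots> \<le> tailF G y" by (rule Gb_mono) simp
  finally show ?thesis .
qed

lemma longtail:
  assumes R: "((\<lambda>y. tailF (G \<star> G) y / tailF G y) \<longlongrightarrow> 2) at_top"
    and s: "0 \<le> s" and d: "0 < d"
  shows "eventually (\<lambda>y. tailF G (y - s) \<le> (1 + d) * tailF G y) at_top"
proof -
  define g where "g = tailF G s"
  have g: "0 < g" unfolding g_def by (rule Gb_pos[OF R])
  define Q where "Q y = (tailF (G \<star> G) y / tailF G y - 2 + g) / (g - tailF G y)" for y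
  have "(Q \<longlongrightarrow> (2 - 2 + g) / (g - 0)) at_top"
    unfolding Q_def using g by (intro tendsto_intros R Gb_lim) auto
  then have "(Q \<longlongrightarrow> 1) at_top" using g by simp
  then have e1: "eventually (\<lambda>y. Q y < 1 + d) at_top"
    by (rule order_tendstoD) (use d in simp)
  have e2: "eventually (\<lambda>y. tailF G y < g) at_top"
    using Gb_lim by (rule order_tendstoD) (use g in simp)
  have e3: "eventually (\<lambda>y. s < y) at_top" by (rule eventually_gt_at_top)
  show ?thesis using e1 e2 e3
  proof eventually_elim
    case (elim y)
    have py: "0 < tailF G y" by (rule Gb_pos[OF R])
    have ineq: "tailF G y + (1 - g) * tailF G y + (g - tailF G y) * tailF G (y - s) \<le> tailF (G \<star> G) y"
      unfolding g_def using lt_ineq[OF s elim(3)] .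
    have t2: "tailF (G \<star> G) y = (tailF (G \<star> G) y / tailF G y) * tailF G y" using py by simp
    have "(g - tailF G y) * tailF G (y - s) \<le> tailF G y * (tailF (G \<star> G) y / tailF G y - 2 + g)"
      using ineq t2 by (simp add: algebra_simps)
    then have "tailF G (y - s) \<le> tailF G y * (tailF (G \<star> G) y / tailF G y - 2 + g) / (g - tailF G y)"
      using elim(2) by (simp add: pos_le_divide_eq mult.commute)
    also have "\<dots> = tailF G y * Q y" unfolding Q_def by simp
    also have "\<dots> \<le> tailF G y * (1 + d)" using elim(1) py by (intro mult_left_mono) auto
    finally show ?case by (simp add: mult.commute)
  qed
qed

end


lemma key_ineq:
  fixes M Fs :: "'a measure" and Y1 Y2 :: "'a \<Rightarrow> real"
  assumes PM: "prob_space M" and SA: "subalgebra M Fs"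
    and m1[measurable]: "Y1 \<in> borel_measurable M" and m2[measurable]: "Y2 \<in> borel_measurable M"
    and CI: "cond_indep_rv M Fs Y1 Y2"
    and bnd: "AE \<omega> in M. cprob_given M Fs {\<omega> \<in> space M. Y1 \<omega> > a} \<omega> \<le> b"
    and B: "B \<in> sets borel"
  shows "measure M {\<omega> \<in> space M. a < Y1 \<omega> \<and> Y2 \<omega> \<in> B} \<le> b * measure M {\<omega> \<in> space M. Y2 \<omega> \<in> B}"
proof -
  interpret prob_space M by (rule PM)
  interpret finite_measure_subalgebra M Fs by unfold_locales (rule SA)
  define cA where "cA = cprob_given M Fs (Y1 -` {a<..})"
  define cB where "cB = cprob_given M Fs (Y2 -` B)"
  define cAB where "cAB = cprob_given M Fs (Y1 -` {a<..} \<inter> Y2 -` B)"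
  have sets1: "Y1 -` {a<..} \<inter> space M \<in> sets M" by measurable
  have sets2: "Y2 -` B \<inter> space M \<in> sets M" using B by measurable
  have sets3: "Y1 -` {a<..} \<inter> Y2 -` B \<inter> space M \<in> sets M" using B by measurable
  have mA[measurable]: "cA \<in> borel_measurable M" unfolding cA_def cprob_given_def by measurable
  have mB[measurable]: "cB \<in> borel_measurable M" unfolding cB_def cprob_given_def by measurable
  have mAB[measurable]: "cAB \<in> borel_measurable M" unfolding cAB_def cprob_given_def by measurable
  have i3: "integrable M (indicator (Y1 -` {a<..} \<inter> Y2 -` B \<inter> space M) :: 'a \<Rightarrow> real)"
    using sets3 by (intro integrable_real_indicator) (auto simp: less_top[symmetric])
  have i2: "integrable M (indicator (Y2 -` B \<inter> space M) :: 'a \<Rightarrow> real)"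
    using sets2 by (intro integrable_real_indicator) (auto simp: less_top[symmetric])
  have iAB: "integrable M cAB" "integral\<^sup>L M cAB = measure M (Y1 -` {a<..} \<inter> Y2 -` B \<inter> space M)"
    unfolding cAB_def cprob_given_def using real_cond_exp_int[OF i3] by (auto simp: Int_assoc)
  have iB: "integrable M cB" "integral\<^sup>L M cB = measure M (Y2 -` B \<inter> space M)"
    unfolding cB_def cprob_given_def using real_cond_exp_int[OF i2] by auto
  have eq: "AE \<omega> in M. cAB \<omega> = cA \<omega> * cB \<omega>"
    using CI B unfolding cond_indep_rv_def cA_def cB_def cAB_def by auto
  have posB: "AE \<omega> in M. 0 \<le> cB \<omega>" unfolding cB_def cprob_given_def
    using sets2 by (intro real_cond_exp_pos) (auto intro: borel_measurable_indicator)
  have "{\<omega> \<in> space M. Y1 \<omega> > a} \<inter> space M = Y1 -` {a<..} \<inter> space M" by auto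
  then have cAeq: "cA = cprob_given M Fs {\<omega> \<in> space M. Y1 \<omega> > a}"
    unfolding cA_def cprob_given_def by simp
  have iAB': "integrable M (\<lambda>\<omega>. cA \<omega> * cB \<omega>)"
    using iAB(1) integrable_cong_AE[of cAB M "\<lambda>\<omega>. cA \<omega> * cB \<omega>"] eq by auto
  have "measure M {\<omega> \<in> space M. a < Y1 \<omega> \<and> Y2 \<omega> \<in> B} = integral\<^sup>L M cAB"
    using iAB(2) by (simp add: Int_def conj_commute)
  also have "\<dots> = (\<integral>\<omega>. cA \<omega> * cB \<omega> \<partial>M)" by (rule integral_cong_AE) (use eq in auto)
  also have "\<dots> \<le> (\<integral>\<omega>. b * cB \<omega> \<partial>M)"
  proof (rule integral_mono_AE)
    show "integrable M (\<lambda>\<omega>. cA \<omega> * cB \<omega>)" by (rule iAB')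
    show "integrable M (\<lambda>\<omega>. b * cB \<omega>)" using iB(1) by auto
    show "AE \<omega> in M. cA \<omega> * cB \<omega> \<le> b * cB \<omega>" using bnd posB unfolding cAeq[symmetric]
      by eventually_elim (auto intro: mult_right_mono)
  qed
  also have "\<dots> = b * measure M {\<omega> \<in> space M. Y2 \<omega> \<in> B}" using iB(2) by (simp add: Int_def conj_commute)
  finally show ?thesis .
qed


lemma abel_id:
  fixes a T :: "nat \<Rightarrow> real"
  shows "(\<Sum>k<Suc n. a k * (T k - T (Suc k))) + a n * T (Suc n)
       = a 0 * T 0 + (\<Sum>k<n. (a (Suc k) - a k) * T (Suc k))"
  by (induction n) (simp_all add: algebra_simps)

lemma det_bound:
  fixes F :: "real measure" and M Fs :: "'a measure"
    and Y1 Y2 :: "'a \<Rightarrow> real" and r h y K :: real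
  assumes PM: "prob_space M" and SA: "subalgebra M Fs"
    and m1[measurable]: "Y1 \<in> borel_measurable M" and m2[measurable]: "Y2 \<in> borel_measurable M"
    and CI: "cond_indep_rv M Fs Y1 Y2"
    and ii: "\<forall>y. AE \<omega> in M. cprob_given M Fs {\<omega> \<in> space M. Y1 \<omega> > y} \<omega> \<le> r * tailF F y"
    and r: "0 < r"
    and PF: "prob_space F" and SF: "sets F = sets borel"
    and h: "1 \<le> h" "2 * h + 2 < y"
    and K: "0 \<le> K"
    and T2K: "\<And>t. h \<le> t \<Longrightarrow> measure M {\<omega> \<in> space M. Y2 \<omega> > t} \<le> K * tailF (pos_part_distr F) t"
  defines "G \<equiv> pos_part_distr F"
  shows "measure M {\<omega> \<in> space M. Y1 \<omega> + Y2 \<omega> > y}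
     \<le> measure M {\<omega> \<in> space M. Y1 \<omega> > y - h} + measure M {\<omega> \<in> space M. Y2 \<omega> > y - h}
       + r * (K * tailF G (y - (h + 1)) * tailF G h
              + K * (tailF (G \<star> G) (y - 1) - (1 - tailF G (h - 1)) * tailF G (y - 1)
                     - (1 - tailF G h) * tailF G (y - 1)))
       + r * tailF G h * measure M {\<omega> \<in> space M. Y2 \<omega> > y - h}"
proof -
  interpret prob_space M by (rule PM)
  have rdG: "real_distribution G" unfolding G_def by (rule ppd_basic(4)[OF PF SF])
  have negG: "measure G {..<0} = 0" unfolding G_def by (rule ppd_neg[OF PF SF])
  interpret gdist G by (rule gdist.intro[OF rdG negG])
  define Gb where "Gb = tailF G"
  define T1 where "T1 t = prob {\<omega> \<in> space M. Y1 \<omega> > t}" for t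
  define T2 where "T2 t = prob {\<omega> \<in> space M. Y2 \<omega> > t}" for t
  have T2K': "T2 t \<le> K * Gb t" if "h \<le> t" for t
    using T2K[OF that] unfolding T2_def Gb_def G_def .
  have T2mono: "T2 t \<le> T2 s" if "s \<le> t" for s t
  proof -
    have "{\<omega> \<in> space M. Y2 \<omega> > t} \<subseteq> {\<omega> \<in> space M. Y2 \<omega> > s}" using that by auto
    moreover have "{\<omega> \<in> space M. Y2 \<omega> > s} \<in> events" by measurable
    ultimately show ?thesis unfolding T2_def by (rule finite_measure_mono)
  qed
  have T2nn: "0 \<le> T2 t" for t unfolding T2_def by (rule measure_nonneg)
  have GbF: "tailF F a = Gb a" if "0 \<le> a" for a
    unfolding Gb_def G_def using ppd_tail[OF PF SF that] by simp
  have Gbm: "Gb b \<le> Gb a" if "a \<le> b" for a b unfolding Gb_def by (rule Gb_mono[OF that])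
  have Gbnn: "0 \<le> Gb a" for a unfolding Gb_def by (rule Gb_nn)
  have T2int: "prob {\<omega> \<in> space M. Y2 \<omega> \<in> {u<..v}} = T2 u - T2 v" if uv: "u \<le> v" for u v
  proof -
    have e: "{\<omega> \<in> space M. Y2 \<omega> > u} = {\<omega> \<in> space M. Y2 \<omega> \<in> {u<..v}} \<union> {\<omega> \<in> space M. Y2 \<omega> > v}"
      using uv by auto
    have "prob ({\<omega> \<in> space M. Y2 \<omega> \<in> {u<..v}} \<union> {\<omega> \<in> space M. Y2 \<omega> > v})
       = prob {\<omega> \<in> space M. Y2 \<omega> \<in> {u<..v}} + prob {\<omega> \<in> space M. Y2 \<omega> > v}"
      by (rule finite_measure_Union) auto
    then show ?thesis unfolding T2_def e by simp
  qed
  have keyB: "prob {\<omega> \<in> space M. a < Y1 \<omega> \<and> Y2 \<omega> \<in> B} \<le> r * Gb a * prob {\<omega> \<in> space M. Y2 \<omega> \<in> B}"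
    if a: "0 \<le> a" and B: "B \<in> sets borel" for a B
  proof -
    have "AE \<omega> in M. cprob_given M Fs {\<omega> \<in> space M. Y1 \<omega> > a} \<omega> \<le> r * Gb a"
    proof -
      have "AE \<omega> in M. cprob_given M Fs {\<omega> \<in> space M. Y1 \<omega> > a} \<omega> \<le> r * tailF F a"
        using ii by blast
      then show ?thesis using GbF[OF a] by simp
    qed
    from key_ineq[OF PM SA m1 m2 CI this B] show ?thesis .
  qed
  define E where "E = {\<omega> \<in> space M. y < Y1 \<omega> + Y2 \<omega> \<and> h < Y1 \<omega> \<and> h < Y2 \<omega>}"
  have step1: "prob {\<omega> \<in> space M. Y1 \<omega> + Y2 \<omega> > y} \<le> T1 (y - h) + T2 (y - h) + prob E"
  proof -
    have "prob {\<omega> \<in> space M. Y1 \<omega> + Y2 \<omega> > y}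
        \<le> prob (({\<omega> \<in> space M. Y1 \<omega> > y - h} \<union> {\<omega> \<in> space M. Y2 \<omega> > y - h}) \<union> E)"
      by (rule finite_measure_mono) (auto simp: E_def)
    also have "\<dots> \<le> prob ({\<omega> \<in> space M. Y1 \<omega> > y - h} \<union> {\<omega> \<in> space M. Y2 \<omega> > y - h}) + prob E"
      by (rule measure_Un_le) (auto simp: E_def)
    also have "prob ({\<omega> \<in> space M. Y1 \<omega> > y - h} \<union> {\<omega> \<in> space M. Y2 \<omega> > y - h}) \<le> T1 (y - h) + T2 (y - h)"
      unfolding T1_def T2_def by (rule measure_Un_le) auto
    finally show ?thesis by simp
  qed
  define n where "n = nat \<lceil>y - 2 * h\<rceil>"
  have n1: "y - 2 * h \<le> real n" "real n < y - 2 * h + 1"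
    unfolding n_def using ceiling_correct[of "y - 2 * h"] h by auto
  have npos: "1 \<le> n" using n1 h by linarith
  define C where "C k = {\<omega> \<in> space M. y - h - real k - 1 < Y1 \<omega> \<and> Y2 \<omega> \<in> {h + real k<..h + real k + 1}}" for k
  define D where "D = {\<omega> \<in> space M. h < Y1 \<omega> \<and> Y2 \<omega> \<in> {h + real n<..}}"
  have Csets: "C k \<in> events" for k unfolding C_def by measurable
  have Dsets: "D \<in> events" unfolding D_def by measurable
  have incl: "E \<subseteq> (\<Union>k\<in>{..<n}. C k) \<union> D"
  proof
    fix \<omega> assume w: "\<omega> \<in> E"
    show "\<omega> \<in> (\<Union>k\<in>{..<n}. C k) \<union> D"
    proof (cases "Y2 \<omega> > h + real n")
      case True then show ?thesis using w by (auto simp: E_def D_def)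
    next
      case False
      define j where "j = \<lceil>Y2 \<omega> - h\<rceil>"
      have j1: "of_int j - 1 < Y2 \<omega> - h" "Y2 \<omega> - h \<le> of_int j"
        unfolding j_def using ceiling_correct by auto
      have jpos: "1 \<le> j" using j1 w by (auto simp: E_def)
      have jn: "j \<le> int n" unfolding j_def using False by (simp add: ceiling_le_iff)
      define k where "k = nat (j - 1)"
      have kj: "real k = of_int j - 1" unfolding k_def using jpos by simp
      have kn: "k < n" unfolding k_def using jpos jn by linarith
      have "\<omega> \<in> C k" using w j1 kj by (auto simp: E_def C_def)
      then show ?thesis using kn by auto
    qed
  qed
  have step2: "prob E \<le> (\<Sum>k<n. prob (C k)) + prob D"
  proof -
    have "prob E \<le> prob ((\<Union>k\<in>{..<n}. C k) \<union> D)"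
      by (rule finite_measure_mono[OF incl]) (use Csets Dsets in auto)
    also have "\<dots> \<le> prob (\<Union>k\<in>{..<n}. C k) + prob D"
      by (rule measure_Un_le) (use Csets Dsets in auto)
    also have "prob (\<Union>k\<in>{..<n}. C k) \<le> (\<Sum>k<n. prob (C k))"
      by (rule finite_measure_subadditive_finite) (use Csets in auto)
    finally show ?thesis by simp
  qed
  define a where "a k = Gb (y - h - real k - 1)" for k
  define T where "T k = T2 (h + real k)" for k
  have step3: "prob (C k) \<le> r * (a k * (T k - T (Suc k)))" if k: "k < n" for k
  proof -
    have "real k + 1 \<le> real n" using k by linarith
    then have a0: "0 \<le> y - h - real k - 1" using n1 h by linarith
    have "prob (C k) \<le> r * Gb (y - h - real k - 1) * prob {\<omega> \<in> space M. Y2 \<omega> \<in> {h + real k<..h + real k + 1}}"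
      unfolding C_def by (rule keyB[OF a0]) simp
    also have "prob {\<omega> \<in> space M. Y2 \<omega> \<in> {h + real k<..h + real k + 1}} = T k - T (Suc k)"
      unfolding T_def by (subst T2int) (auto simp: add_ac)
    finally show ?thesis unfolding a_def by (simp add: mult.assoc)
  qed
  have step4: "prob D \<le> r * Gb h * T2 (y - h)"
  proof -
    have "prob D \<le> r * Gb h * prob {\<omega> \<in> space M. Y2 \<omega> \<in> {h + real n<..}}"
      unfolding D_def by (rule keyB) (use h in auto)
    also have "prob {\<omega> \<in> space M. Y2 \<omega> \<in> {h + real n<..}} = T2 (h + real n)" unfolding T2_def by simp
    also have "\<dots> \<le> T2 (y - h)" using n1 by (intro T2mono) linarith
    finally show ?thesis using r Gbnn[of h] by (simp add: mult_left_mono)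
  qed
  obtain m where nm: "n = Suc m" using npos by (cases n) auto
  have step5: "(\<Sum>k<n. a k * (T k - T (Suc k))) \<le> a 0 * T 0 + (\<Sum>k<m. (a (Suc k) - a k) * T (Suc k))"
  proof -
    have "0 \<le> a m * T (Suc m)" unfolding a_def T_def using Gbnn T2nn by simp
    then show ?thesis using abel_id[of a T m] unfolding nm by linarith
  qed
  have step6: "a 0 * T 0 \<le> K * Gb (y - (h + 1)) * Gb h"
  proof -
    have "a 0 * T 0 \<le> a 0 * (K * Gb h)" unfolding T_def a_def
      by (intro mult_left_mono) (use T2K' Gbnn in auto)
    then show ?thesis unfolding a_def by (simp add: algebra_simps)
  qed
  define Mn where "Mn = {p::real \<times> real. y - 1 < fst p + snd p \<and> h - 1 < fst p \<and> h < snd p}"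
  define R where "R k = {y - h - real k - 2<..y - h - real k - 1} \<times> {h + real k + 1<..}" for k
  have step7: "(\<Sum>k<m. (a (Suc k) - a k) * T (Suc k)) \<le> K * measure (G \<Otimes>\<^sub>M G) Mn"
  proof -
    interpret P: prob_space "G \<Otimes>\<^sub>M G" by (rule pps)
    have Rsets: "R k \<in> P.events" for k unfolding R_def by (auto intro!: pair_measureI)
    have Rm: "(a (Suc k) - a k) = measure G {y - h - real k - 2<..y - h - real k - 1}" for k
      unfolding a_def Gb_def by (subst Gint) (auto simp: algebra_simps)
    have Rm2: "measure (G \<Otimes>\<^sub>M G) (R k) = (a (Suc k) - a k) * Gb (h + real k + 1)" for k
      unfolding R_def Rm Gb_def by (simp add: rect Gopen)
    have anonneg: "0 \<le> a (Suc k) - a k" for k unfolding a_def by (simp add: Gbm)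
    have "(\<Sum>k<m. (a (Suc k) - a k) * T (Suc k)) \<le> (\<Sum>k<m. (a (Suc k) - a k) * (K * Gb (h + real k + 1)))"
    proof (rule sum_mono)
      fix k assume "k \<in> {..<m}"
      have "T (Suc k) \<le> K * Gb (h + real k + 1)" unfolding T_def using T2K'[of "h + real (Suc k)"]
        by (simp add: add_ac)
      then show "(a (Suc k) - a k) * T (Suc k) \<le> (a (Suc k) - a k) * (K * Gb (h + real k + 1))"
        by (rule mult_left_mono) (rule anonneg)
    qed
    also have "\<dots> = K * (\<Sum>k<m. measure (G \<Otimes>\<^sub>M G) (R k))"
      by (simp add: Rm2 sum_distrib_left algebra_simps)
    also have "(\<Sum>k<m. measure (G \<Otimes>\<^sub>M G) (R k)) = measure (G \<Otimes>\<^sub>M G) (\<Union>k\<in>{..<m}. R k)"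
    proof (rule P.finite_measure_finite_Union[symmetric])
      show "finite {..<m}" by simp
      show "R ` {..<m} \<subseteq> P.events" using Rsets by auto
      show "disjoint_family_on R {..<m}" unfolding disjoint_family_on_def
      proof (intro ballI impI)
        fix i j assume "i \<in> {..<m}" "j \<in> {..<m}" and ij: "i \<noteq> j"
        show "R i \<inter> R j = {}"
        proof (rule ccontr)
          assume "R i \<inter> R j \<noteq> {}"
          then obtain x where "y - h - real i - 2 < x" "x \<le> y - h - real i - 1"
            "y - h - real j - 2 < x" "x \<le> y - h - real j - 1" unfolding R_def by auto
          then have "real i < real j + 1" "real j < real i + 1" by linarith+
          then have "i < j + 1" "j < i + 1" by linarith+
          then show False using ij by linarith
        qed
      qed
    qed
    also have "measure (G \<Otimes>\<^sub>M G) (\<Union>k\<in>{..<m}. R k) \<le> measure (G \<Otimes>\<^sub>M G) Mn"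
    proof (rule P.finite_measure_mono)
      show "(\<Union>k\<in>{..<m}. R k) \<subseteq> Mn"
      proof
        fix p assume "p \<in> (\<Union>k\<in>{..<m}. R k)"
        then obtain k where k: "k < m" "p \<in> R k" by auto
        have "real k + 2 \<le> real n" using k nm by linarith
        then show "p \<in> Mn" using k n1 unfolding R_def Mn_def by auto
      qed
      show "Mn \<in> P.events" unfolding Mn_def by (rule Mn_sets)
    qed
    finally show ?thesis using K by (simp add: mult_left_mono)
  qed
  have step8: "measure (G \<Otimes>\<^sub>M G) Mn \<le> tailF (G \<star> G) (y - 1) - (1 - Gb (h - 1)) * Gb (y - 1) - (1 - Gb h) * Gb (y - 1)"
    using mn_ineq[of h "y - 1"] h unfolding Mn_def Gb_def by simp
  have sumC: "(\<Sum>k<n. prob (C k)) \<le> r * (\<Sum>k<n. a k * (T k - T (Suc k)))"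
    unfolding sum_distrib_left by (rule sum_mono) (use step3 in auto)
  have "prob {\<omega> \<in> space M. Y1 \<omega> + Y2 \<omega> > y}
      \<le> T1 (y - h) + T2 (y - h) + r * (K * Gb (y - (h + 1)) * Gb h + K * measure (G \<Otimes>\<^sub>M G) Mn) + r * Gb h * T2 (y - h)"
  proof -
    have "(\<Sum>k<n. a k * (T k - T (Suc k))) \<le> K * Gb (y - (h + 1)) * Gb h + K * measure (G \<Otimes>\<^sub>M G) Mn"
      using step5 step6 step7 by linarith
    then have "r * (\<Sum>k<n. a k * (T k - T (Suc k))) \<le> r * (K * Gb (y - (h + 1)) * Gb h + K * measure (G \<Otimes>\<^sub>M G) Mn)"
      using r by (intro mult_left_mono) auto
    then show ?thesis using step1 step2 sumC step4 by linarith
  qed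
  also have "\<dots> \<le> T1 (y - h) + T2 (y - h) + r * (K * Gb (y - (h + 1)) * Gb h + K * (tailF (G \<star> G) (y - 1) - (1 - Gb (h - 1)) * Gb (y - 1) - (1 - Gb h) * Gb (y - 1))) + r * Gb h * T2 (y - h)"
    using step8 r K by (simp add: mult_left_mono)
  finally show ?thesis unfolding T1_def T2_def Gb_def .
qed



lemma hypconv:
  fixes f g :: "real \<Rightarrow> real"
  assumes "asymp_le_mult f c g" "c \<ge> 0" "\<And>y. g y > 0" "d > 0"
  shows "eventually (\<lambda>y. f y \<le> (c + d) * g y) at_top"
proof (cases "c = 0")
  case True
  then have "f \<in> o[at_top](g)" using assms(1) by (simp add: asymp_le_mult_def)
  from landau_o.smallD[OF this assms(4)] show ?thesis
  proof eventually_elim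
    case (elim y)
    then show ?case using assms(3)[of y] True by auto
  qed
next
  case False
  then have c: "c > 0" using assms(2) by simp
  have "Limsup at_top (\<lambda>y. ereal (f y / (c * g y))) \<le> 1"
    using assms(1) False by (simp add: asymp_le_mult_def asymp_le_def)
  also have "\<dots> < ereal (1 + d / c)" using c assms(4) by simp
  finally have "eventually (\<lambda>y. ereal (f y / (c * g y)) < ereal (1 + d / c)) at_top"
    by (rule Limsup_lessD)
  then show ?thesis
  proof eventually_elim
    case (elim y)
    have cg: "c * g y > 0" using c assms(3)[of y] by simp
    have "f y / (c * g y) < 1 + d / c" using elim by simp
    then have "f y < (1 + d / c) * (c * g y)" using cg by (simp add: divide_less_eq)
    also have "\<dots> = (c + d) * g y" using c by (simp add: field_simps)
    finally show ?case by simp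
  qed
qed

lemma conclconv:
  fixes f g :: "real \<Rightarrow> real"
  assumes "c \<ge> 0" "\<And>y. g y > 0" "\<And>y. f y \<ge> 0"
    and ev: "\<And>d. d > 0 \<Longrightarrow> eventually (\<lambda>y. f y \<le> (c + d) * g y) at_top"
  shows "asymp_le_mult f c g"
proof (cases "c = 0")
  case True
  have "f \<in> o[at_top](g)"
  proof (rule landau_o.smallI)
    fix d :: real assume d: "d > 0"
    from ev[OF d] show "eventually (\<lambda>y. norm (f y) \<le> d * norm (g y)) at_top"
    proof eventually_elim
      case (elim y)
      then show ?case using assms(2,3)[of y] True by auto
    qed
  qed
  then show ?thesis using True by (simp add: asymp_le_mult_def)
next
  case False
  then have c: "c > 0" using assms(1) by simp
  have "Limsup at_top (\<lambda>y. ereal (f y / (c * g y))) \<le> 1"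
  proof (rule ereal_le_epsilon2)
    fix e :: real assume e: "0 < e"
    have "eventually (\<lambda>y. ereal (f y / (c * g y)) \<le> ereal (1 + e)) at_top"
      using ev[of "c * e"] c e
    proof -
      from ev[of "c * e"] c e have "eventually (\<lambda>y. f y \<le> (c + c * e) * g y) at_top" by simp
      then show ?thesis
      proof eventually_elim
        case (elim y)
        have cg: "c * g y > 0" using c assms(2)[of y] by simp
        have "f y \<le> (1 + e) * (c * g y)" using elim by (simp add: algebra_simps)
        then have "f y / (c * g y) \<le> 1 + e" using cg by (simp add: divide_le_eq)
        then show ?case by simp
      qed
    qed
    then have "Limsup at_top (\<lambda>y. ereal (f y / (c * g y))) \<le> ereal (1 + e)"
      by (rule Limsup_bounded)
    then show "Limsup at_top (\<lambda>y. ereal (f y / (c * g y))) \<le> 1 + ereal e" by (simp add: add.commute)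
  qed
  then show ?thesis using False by (simp add: asymp_le_mult_def asymp_le_def)
qed

lemma ev_shift:
  fixes P :: "real \<Rightarrow> bool"
  assumes "eventually P at_top"
  shows "eventually (\<lambda>y. P (y - s)) at_top"
proof -
  obtain N where N: "\<And>x. x \<ge> N \<Longrightarrow> P x" using assms by (auto simp: eventually_at_top_linorder)
  show ?thesis unfolding eventually_at_top_linorder
    by (rule exI[of _ "N + s"]) (auto intro: N)
qed

lemma numeric:
  fixes S A1 A2 g gyh gyh1 gy1 t2 u v c1 c2 d r K e :: real
  assumes S: "S \<le> A1 + A2 + r * (K * gyh1 * v + K * (t2 - (1 - u) * gy1 - (1 - v) * gy1)) + r * v * A2"
    and a1: "A1 \<le> (c1 + d) * gyh" and a2: "A2 \<le> (c2 + d) * gyh"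
    and g1: "gyh \<le> (1 + d) * g" and g2: "gyh1 \<le> (1 + d) * g" and g3: "gy1 \<le> (1 + d) * g"
    and t2: "t2 \<le> (2 + d) * gy1"
    and uv: "0 \<le> v" "v \<le> u" and pos: "0 \<le> g" "0 \<le> gy1" "0 \<le> gyh" "0 \<le> gyh1"
    and K: "K = c2 + 1" and d: "0 < d" "d \<le> 1" and c: "0 \<le> c1" "0 \<le> c2" and r: "0 < r"
    and de: "d * (c1 + c2 + 4 + 2 * r * K) \<le> e / 2" and ue: "8 * r * K * u \<le> e / 2"
  shows "S \<le> (c1 + c2 + e) * g"
proof -
  have K1: "K \<ge> 1" using K c by simp
  have rK: "0 \<le> r * K" using r K1 by simp
  have b1: "A1 + A2 \<le> (c1 + c2 + 2 * d) * ((1 + d) * g)"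
  proof -
    have "A1 + A2 \<le> (c1 + c2 + 2 * d) * gyh" using a1 a2 by (simp add: algebra_simps)
    also have "\<dots> \<le> (c1 + c2 + 2 * d) * ((1 + d) * g)" using g1 c d by (intro mult_left_mono) auto
    finally show ?thesis .
  qed
  have b1': "(c1 + c2 + 2 * d) * ((1 + d) * g) \<le> (c1 + c2 + d * (c1 + c2 + 4)) * g"
  proof -
    have "(c1 + c2 + 2 * d) * (1 + d) \<le> c1 + c2 + d * (c1 + c2 + 4)"
    proof -
      have "(c1 + c2 + 2 * d) * (1 + d) = c1 + c2 + d * (c1 + c2 + 2) + 2 * d * d" by (simp add: algebra_simps)
      moreover have "d * d \<le> d" using d by (simp add: mult_le_cancel_left1)
      ultimately show ?thesis by (simp add: algebra_simps)
    qed
    then show ?thesis using pos by (metis mult.assoc mult_right_mono)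
  qed
  have b2: "r * (K * gyh1 * v) \<le> 2 * r * K * u * g"
  proof -
    have "gyh1 * v \<le> ((1 + d) * g) * u" using g2 uv pos by (intro mult_mono) auto
    also have "\<dots> \<le> 2 * g * u" using d pos uv by (intro mult_right_mono) auto
    finally have "gyh1 * v \<le> 2 * g * u" .
    then have "r * K * (gyh1 * v) \<le> r * K * (2 * g * u)" using rK by (intro mult_left_mono) auto
    then show ?thesis by (simp add: algebra_simps)
  qed
  have b3: "r * (K * (t2 - (1 - u) * gy1 - (1 - v) * gy1)) \<le> r * K * (2 * d + 4 * u) * g"
  proof -
    have "t2 - (1 - u) * gy1 - (1 - v) * gy1 \<le> (d + 2 * u) * gy1"
      using t2 uv pos by (simp add: algebra_simps) (smt (verit) mult_left_mono)
    also have "\<dots> \<le> (d + 2 * u) * ((1 + d) * g)" using g3 d uv by (intro mult_left_mono) auto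
    also have "\<dots> \<le> (d + 2 * u) * (2 * g)" using d uv pos by (intro mult_left_mono mult_right_mono) auto
    finally have "t2 - (1 - u) * gy1 - (1 - v) * gy1 \<le> (2 * d + 4 * u) * g" by (simp add: algebra_simps)
    then have "r * K * (t2 - (1 - u) * gy1 - (1 - v) * gy1) \<le> r * K * ((2 * d + 4 * u) * g)"
      using rK by (intro mult_left_mono) auto
    then show ?thesis by (simp add: algebra_simps)
  qed
  have b4: "r * v * A2 \<le> 2 * r * K * u * g"
  proof -
    have "A2 \<le> (c2 + d) * ((1 + d) * g)" using a2 g1 c d by (meson add_nonneg_nonneg less_imp_le mult_left_mono order_trans)
    also have "\<dots> \<le> K * (2 * g)" using K d c pos by (intro mult_mono) auto
    finally have A2: "A2 \<le> 2 * K * g" by simp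
    have "v * A2 \<le> u * (2 * K * g)"
    proof (cases "A2 \<ge> 0")
      case True then show ?thesis using uv A2 by (intro mult_mono) auto
    next
      case False then have "v * A2 \<le> 0" using uv by (simp add: mult_nonneg_nonpos)
      also have "0 \<le> u * (2 * K * g)" using uv K1 pos by simp
      finally show ?thesis .
    qed
    then have "r * (v * A2) \<le> r * (u * (2 * K * g))" using r by (intro mult_left_mono) auto
    then show ?thesis by (simp add: algebra_simps)
  qed
  have "S \<le> (c1 + c2 + d * (c1 + c2 + 4)) * g + 2 * r * K * u * g + r * K * (2 * d + 4 * u) * g + 2 * r * K * u * g"
    using S b1 b1' b2 b3 b4 by (simp add: algebra_simps)
  also have "\<dots> = (c1 + c2 + d * (c1 + c2 + 4 + 2 * r * K) + 8 * r * K * u) * g" by (simp add: algebra_simps)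
  also have "\<dots> \<le> (c1 + c2 + e) * g" using de ue pos by (intro mult_right_mono) auto
  finally show ?thesis .
qed

theorem lemmaA2:
  fixes F :: "real measure" and M Fs :: "'a measure"
    and Y1 Y2 :: "'a \<Rightarrow> real" and c1 c2 r :: real
  assumes "subexponential F"
    and "prob_space M"
    and "subalgebra M Fs"
    and "Y1 \<in> borel_measurable M" and "Y2 \<in> borel_measurable M"
    and "cond_indep_rv M Fs Y1 Y2"
    and "c1 \<ge> 0" and "c2 \<ge> 0" and "r > 0"
    and "asymp_le_mult (\<lambda>y. prob_space.prob M {\<omega> \<in> space M. Y1 \<omega> > y}) c1 (tailF F)"
    and "asymp_le_mult (\<lambda>y. prob_space.prob M {\<omega> \<in> space M. Y2 \<omega> > y}) c2 (tailF F)"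
    and "\<forall>y. AE \<omega> in M. cprob_given M Fs {\<omega> \<in> space M. Y1 \<omega> > y} \<omega> \<le> r * tailF F y"
  shows "asymp_le_mult (\<lambda>y. prob_space.prob M {\<omega> \<in> space M. Y1 \<omega> + Y2 \<omega> > y})
           (c1 + c2) (tailF F)"
proof -
  have PF: "prob_space F" and SF: "sets F = sets borel"
    and Rlim0: "((\<lambda>y. tailF (pos_part_distr F \<star> pos_part_distr F) y / tailF (pos_part_distr F) y) \<longlongrightarrow> 2) at_top"
    using assms(1) unfolding subexponential_def by auto
  define G where "G = pos_part_distr F"
  have Rlim: "((\<lambda>y. tailF (G \<star> G) y / tailF G y) \<longlongrightarrow> 2) at_top" using Rlim0 unfolding G_def .
  interpret prob_space M by (rule assms(2))
  have rdG: "real_distribution G" unfolding G_def by (rule ppd_basic(4)[OF PF SF])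
  have negG: "measure G {..<0} = 0" unfolding G_def by (rule ppd_neg[OF PF SF])
  interpret gdist G by (rule gdist.intro[OF rdG negG])
  have Gbpos: "0 < tailF G y" for y by (rule Gb_pos[OF Rlim])
  have GbF: "tailF F a = tailF G a" if "0 \<le> a" for a
    unfolding G_def using ppd_tail[OF PF SF that] by simp
  have Fpos: "0 < tailF F y" for y
  proof -
    interpret pF: prob_space F by (rule PF)
    have "measure F {..y} \<le> measure F {..max y 0}"
      by (rule pF.finite_measure_mono) (auto simp: SF)
    then have "tailF F (max y 0) \<le> tailF F y" unfolding tailF_def by simp
    moreover have "tailF F (max y 0) = tailF G (max y 0)" by (rule GbF) simp
    ultimately show ?thesis using Gbpos[of "max y 0"] by simp
  qed
  define T1 where "T1 y = prob {\<omega> \<in> space M. Y1 \<omega> > y}" for y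
  define T2 where "T2 y = prob {\<omega> \<in> space M. Y2 \<omega> > y}" for y
  define S where "S y = prob {\<omega> \<in> space M. Y1 \<omega> + Y2 \<omega> > y}" for y
  have evpos: "eventually (\<lambda>y::real. 0 \<le> y) at_top" by (rule eventually_ge_at_top)
  have H1: "eventually (\<lambda>y. T1 y \<le> (c1 + d) * tailF G y) at_top" if d: "d > 0" for d
    using hypconv[OF assms(10) assms(7) Fpos d] evpos
    by eventually_elim (simp add: T1_def GbF)
  have H2: "eventually (\<lambda>y. T2 y \<le> (c2 + d) * tailF G y) at_top" if d: "d > 0" for d
    using hypconv[OF assms(11) assms(8) Fpos d] evpos
    by eventually_elim (simp add: T2_def GbF)
  have main: "eventually (\<lambda>y. S y \<le> (c1 + c2 + e) * tailF G y) at_top" if e: "e > 0" for e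
  proof -
    define K where "K = c2 + 1"
    have K0: "0 \<le> K" "1 \<le> K" unfolding K_def using assms(8) by auto
    obtain t0 where t0: "\<And>t. t \<ge> t0 \<Longrightarrow> T2 t \<le> K * tailF G t"
      using H2[of 1] unfolding K_def eventually_at_top_linorder by auto
    have rK: "0 < 16 * r * K" using assms(9) K0 by simp
    have "eventually (\<lambda>x. tailF G x < e / (16 * r * K)) at_top"
      using Gb_lim by (rule order_tendstoD) (use e rK in simp)
    then obtain X where X: "\<And>x. x \<ge> X \<Longrightarrow> tailF G x < e / (16 * r * K)"
      unfolding eventually_at_top_linorder by auto
    define h where "h = max (max t0 1) (X + 1)"
    have h1: "1 \<le> h" "t0 \<le> h" "X \<le> h - 1" unfolding h_def by auto
    have ue: "8 * r * K * tailF G (h - 1) \<le> e / 2"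
    proof -
      have "tailF G (h - 1) \<le> e / (16 * r * K)" using X[OF h1(3)] by simp
      then have "16 * r * K * tailF G (h - 1) \<le> e" using rK by (simp add: field_simps)
      then show ?thesis by simp
    qed
    define W where "W = c1 + c2 + 4 + 2 * r * K"
    have W: "0 < W" unfolding W_def using assms(7,8) mult_pos_pos[OF assms(9), of K] K0 by linarith
    define d where "d = min 1 (e / (2 * W))"
    have d: "0 < d" "d \<le> 1" unfolding d_def using e W by auto
    have de: "d * W \<le> e / 2"
    proof -
      have "d * W \<le> (e / (2 * W)) * W" using W unfolding d_def by (intro mult_right_mono) auto
      also have "\<dots> = e / 2" using W by simp
      finally show ?thesis .
    qed
    have ev1: "eventually (\<lambda>y. T1 (y - h) \<le> (c1 + d) * tailF G (y - h)) at_top"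
      by (rule ev_shift[OF H1[OF d(1)]])
    have ev2: "eventually (\<lambda>y. T2 (y - h) \<le> (c2 + d) * tailF G (y - h)) at_top"
      by (rule ev_shift[OF H2[OF d(1)]])
    have ev3: "eventually (\<lambda>y. tailF G (y - h) \<le> (1 + d) * tailF G y) at_top"
      by (rule longtail[OF Rlim _ d(1)]) (use h1 in simp)
    have ev4: "eventually (\<lambda>y. tailF G (y - (h + 1)) \<le> (1 + d) * tailF G y) at_top"
      by (rule longtail[OF Rlim _ d(1)]) (use h1 in simp)
    have ev5: "eventually (\<lambda>y. tailF G (y - 1) \<le> (1 + d) * tailF G y) at_top"
      by (rule longtail[OF Rlim _ d(1)]) simp
    have "eventually (\<lambda>y. tailF (G \<star> G) y / tailF G y < 2 + d) at_top"
      using Rlim by (rule order_tendstoD) (use d in simp)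
    then have "eventually (\<lambda>y. tailF (G \<star> G) y \<le> (2 + d) * tailF G y) at_top"
    proof eventually_elim
      case (elim y)
      then show ?case using Gbpos[of y] by (simp add: divide_less_eq less_imp_le)
    qed
    then have ev6: "eventually (\<lambda>y. tailF (G \<star> G) (y - 1) \<le> (2 + d) * tailF G (y - 1)) at_top"
      by (rule ev_shift)
    have ev7: "eventually (\<lambda>y::real. 2 * h + 2 < y) at_top" by (rule eventually_gt_at_top)
    show ?thesis using ev1 ev2 ev3 ev4 ev5 ev6 ev7
    proof eventually_elim
      case (elim y)
      have T2K: "measure M {\<omega> \<in> space M. Y2 \<omega> > t} \<le> K * tailF (pos_part_distr F) t" if "h \<le> t" for t
        using t0[of t] that h1 unfolding T2_def G_def by simp
      have db: "S y \<le> T1 (y - h) + T2 (y - h)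
       + r * (K * tailF G (y - (h + 1)) * tailF G h
              + K * (tailF (G \<star> G) (y - 1) - (1 - tailF G (h - 1)) * tailF G (y - 1)
                     - (1 - tailF G h) * tailF G (y - 1)))
       + r * tailF G h * T2 (y - h)"
        using det_bound[OF assms(2,3,4,5,6,12,9) PF SF h1(1) elim(7) K0(1) T2K]
        unfolding S_def T1_def T2_def G_def .
      show ?case
      proof (rule numeric[OF db elim(1) elim(2) elim(3) elim(4) elim(5) elim(6)])
        show "0 \<le> tailF G h" by (rule Gb_nn)
        show "tailF G h \<le> tailF G (h - 1)" by (rule Gb_mono) simp
        show "0 \<le> tailF G y" "0 \<le> tailF G (y - 1)" "0 \<le> tailF G (y - h)" "0 \<le> tailF G (y - (h + 1))"
          by (rule Gb_nn)+
        show "K = c2 + 1" by (rule K_def)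
        show "0 < d" "d \<le> 1" by (rule d)+
        show "0 \<le> c1" "0 \<le> c2" "0 < r" by (rule assms)+
        show "d * (c1 + c2 + 4 + 2 * r * K) \<le> e / 2" using de unfolding W_def .
        show "8 * r * K * tailF G (h - 1) \<le> e / 2" by (rule ue)
      qed
    qed
  qed
  show ?thesis
  proof (rule conclconv)
    show "0 \<le> c1 + c2" using assms(7,8) by simp
    show "0 < tailF F y" for y by (rule Fpos)
    show "0 \<le> prob {\<omega> \<in> space M. Y1 \<omega> + Y2 \<omega> > y}" for y by simp
    show "eventually (\<lambda>y. prob {\<omega> \<in> space M. Y1 \<omega> + Y2 \<omega> > y} \<le> (c1 + c2 + e) * tailF F y) at_top"
      if "e > 0" for e
      using main[OF that] evpos by eventually_elim (simp add: S_def GbF)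
  qed
qed

end
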